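(* Let $Q$ be a prime and $\lambda\in\mathbb{N}$ a statistical security parameter. Let $E_1,\dots,E_m$ be encryption functions of an additively homomorphic encryption scheme under $m$ keys of Alice with plaintext moduli $q_1,\dots,q_m$ (pairwise coprime), supporting homomorphic addition of ciphertexts and multiplication of a ciphertext by a plaintext constant modulo $q_i$. If $m=1$ then $q_1=Q$; if $m>1$ then $Q'=\prod_{i=1}^m q_i > Q^2 2^\lambda$. Consider the protocol: Alice picks $s_A\in\mathbb{F}_Q$ uniformly and sends $c_i=E_i(s_A\bmod q_i)$ for $1\le i\le m$. Bob picks $s_B\in\mathbb{F}_Q$ and $r_B\in\mathbb{F}_Q^*$ uniformly, and $u$ uniformly in $\{0,\dots,2^\lambda-1\}$ if $m>1$ (else $u=0$), and returns $d_i=(c_i+E_i(s_B))\cdot((r_B^{-1}\bmod Q)\bmod q_i)+E_i(uQ\bmod q_i)$. Alice decrypts all $d_i$, recovers (by the Chinese Remainder Theorem if $m>1$) the value $v\in\mathbb{Z}_{Q'}$ (with $Q'=Q$ if $m=1$), and sets $r_A=v\bmod Q$. Then the protocol is correct: $r_Ar_B=s_A+s_B$ in $\mathbb{F}_Q$.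
   Context: Elements of $\mathbb{F}_Q$ are represented by integers in $\{0,\dots,Q-1\}$; $r_B^{-1}\bmod Q$ is the inverse of $r_B$ in $\mathbb{F}_Q$; $\mathbb{F}_Q^*=\mathbb{F}_Q\setminus\{0\}$. Operations on ciphertexts $E_i(\cdot)$ denote the corresponding homomorphic operations, so $d_i$ decrypts to $((s_A+s_B)(r_B^{-1}\bmod Q)+uQ)\bmod q_i$. *)

theory Defs
  imports "HOL-Number_Theory.Number_Theory"
begin

text \<open>Homomorphic operations of the additively homomorphic scheme are modelled abstractly:
  Enc i x encrypts plaintext x under Alice's i-th key, Dec i decrypts,
  hadd i adds two ciphertexts, hmul i c k multiplies ciphertext c by plaintext constant k;
  all with plaintext modulus q i.\<close>

end

theory Submission
  imports Defs
begin

lemma coprime_cong_prod_int: "[x = y] (mod (\<Prod>i\<in>A. m i))"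
  if "\<And>i j. \<lbrakk>i \<in> A; j \<in> A; i \<noteq> j\<rbrakk> \<Longrightarrow> coprime (m i) (m j)"
    and "\<And>i. i \<in> A \<Longrightarrow> [x = y] (mod m i)" for x y :: int
  using that
proof (induct A rule: infinite_finite_induct)
  case (insert x A)
  then show ?case
    by simp (metis coprime_cong_mult prod_coprime_right)
qed auto

theorem proposition1:
  fixes Q :: int and lam :: nat and m :: nat and q :: "nat \<Rightarrow> int"
    and Enc :: "nat \<Rightarrow> int \<Rightarrow> 'c" and Dec :: "nat \<Rightarrow> 'c \<Rightarrow> int"
    and hadd :: "nat \<Rightarrow> 'c \<Rightarrow> 'c \<Rightarrow> 'c" and hmul :: "nat \<Rightarrow> 'c \<Rightarrow> int \<Rightarrow> 'c"
    and sA sB rB u v :: int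
  assumes Q_prime: "prime Q"
    and lam_pos: "lam \<ge> 1"
    and m_pos: "m \<ge> 1"
    and q_gt1: "\<And>i. i \<in> {1..m} \<Longrightarrow> q i > 1"
    and q_coprime: "\<And>i j. i \<in> {1..m} \<Longrightarrow> j \<in> {1..m} \<Longrightarrow> i \<noteq> j \<Longrightarrow> coprime (q i) (q j)"
    and m1: "m = 1 \<Longrightarrow> q 1 = Q"
    and mgt1: "m > 1 \<Longrightarrow> (\<Prod>i\<in>{1..m}. q i) > Q^2 * 2^lam"
    and Dec_Enc: "\<And>i x. i \<in> {1..m} \<Longrightarrow> Dec i (Enc i x) = x mod q i"
    and Dec_hadd: "\<And>i c c'. i \<in> {1..m} \<Longrightarrow> Dec i (hadd i c c') = (Dec i c + Dec i c') mod q i"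
    and Dec_hmul: "\<And>i c k. i \<in> {1..m} \<Longrightarrow> Dec i (hmul i c k) = (Dec i c * k) mod q i"
    and sA_range: "sA \<in> {0..<Q}"
    and sB_range: "sB \<in> {0..<Q}"
    and rB_range: "rB \<in> {1..<Q}"
    and u_range: "if m > 1 then u \<in> {0..<2^lam} else u = 0"
    and v_range: "v \<in> {0..<(\<Prod>i\<in>{1..m}. q i)}"
    and v_crt: "\<And>i. i \<in> {1..m} \<Longrightarrow>
        v mod q i = Dec i (hadd i (hmul i (hadd i (Enc i (sA mod q i)) (Enc i sB))
                                           ((modular_inverse Q rB) mod q i))
                                 (Enc i ((u * Q) mod q i)))"
  shows "[(v mod Q) * rB = sA + sB] (mod Q)"
proof -
  define iv where "iv = modular_inverse Q rB"
  define w where "w = (sA + sB) * iv + u * Q"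
  have Qgt: "Q > 1" using Q_prime prime_gt_1_int by blast
  have inv0: "iv \<ge> 0" "iv < Q" unfolding iv_def
    using Qgt modular_inverse_int_nonneg modular_inverse_int_less by auto
  have cop: "coprime rB Q"
    using rB_range Q_prime by (simp add: prime_imp_coprime_int coprime_commute zdvd_not_zless)
  have invc: "[rB * iv = 1] (mod Q)" unfolding iv_def by (rule cong_modular_inverse1[OF cop])
  have vq: "[v = w] (mod q i)" if i: "i \<in> {1..m}" for i
  proof -
    have "v mod q i = w mod q i"
      unfolding v_crt[OF i] using i
      by (simp add: Dec_Enc Dec_hadd Dec_hmul w_def iv_def mod_add_eq mod_mult_eq mod_add_left_eq mod_add_right_eq mod_mult_left_eq mod_mult_right_eq)
    then show ?thesis by (simp add: cong_def)
  qed
  have vw: "[v = w] (mod Q)"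
  proof (cases "m = 1")
    case True
    then show ?thesis using vq[of 1] m1 by simp
  next
    case False
    hence mg: "m > 1" using m_pos by simp
    let ?P = "\<Prod>i\<in>{1..m}. q i"
    have c: "[v = w] (mod ?P)" by (rule coprime_cong_prod_int) (use q_coprime vq in auto)
    have u: "0 \<le> u" "u < 2^lam" using u_range mg by auto
    have w0: "w \<ge> 0" unfolding w_def using sA_range sB_range inv0 u Qgt by auto
    define L :: int where "L = 2^lam"
    have L2: "L \<ge> 2" unfolding L_def using lam_pos
      by (metis one_le_numeral power_increasing power_one_right)
    have a: "(sA + sB) * iv \<le> (2*Q - 2) * (Q - 1)"
      using sA_range sB_range inv0 by (intro mult_mono) auto
    have b: "u * Q \<le> (L - 1) * Q" using u Qgt unfolding L_def by (intro mult_right_mono) auto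
    have d: "(2*Q - 2) * (Q - 1) + (L - 1) * Q \<le> Q^2 * L"
    proof -
      have "(L-2)*(Q*(Q-1)) \<ge> 0" using L2 Qgt by simp
      thus ?thesis using Qgt by (simp add: algebra_simps power2_eq_square)
    qed
    have wlt: "w < ?P" using a b d mgt1[OF mg] unfolding w_def L_def by linarith
    have "v = w" using c v_range w0 wlt
      by (metis atLeastLessThan_iff cong_def mod_pos_pos_trivial)
    then show ?thesis by simp
  qed
  have "[(v mod Q) * rB = w * rB] (mod Q)"
    using vw by (simp add: cong_def mod_mult_left_eq)
  also have "[w * rB = (sA + sB) * (rB * iv)] (mod Q)"
    unfolding w_def by (simp add: cong_def algebra_simps)
  also have "[(sA + sB) * (rB * iv) = (sA + sB) * 1] (mod Q)"
    by (rule cong_mult[OF cong_refl invc])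
  finally show ?thesis by simp
qed

end
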